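(* For any $\beta_0\in(0,\pi)$ there exists a finite point set $P$ in the plane such that $\max_{\beta\in(0,\pi)}\operatorname{area}(\mathcal{O}_\beta\mathcal{H}(P))\neq\operatorname{area}(\mathcal{O}_{\beta_0}\mathcal{H}(P))$.
   Context: For $\beta\in(0,\pi)$, $\mathcal{O}_\beta$ is the pair of lines through the origin with slopes $0$ and $\tan\beta$. Given an apex $a$, every point is uniquely $a+s(1,0)+t(\cos\beta,\sin\beta)$; an $\mathcal{O}_\beta$-quadrant with apex $a$ is one of the four open sets of such points with $s>0,t>0$; $s<0,t>0$; $s>0,t<0$; or $s<0,t<0$. A quadrant is $P$-free if it contains no point of $P$, and the $\mathcal{O}_\beta$-hull $\mathcal{O}_\beta\mathcal{H}(P)$ is the plane minus the union of all $P$-free $\mathcal{O}_\beta$-quadrants. $\operatorname{area}$ denotes Lebesgue measure. *)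

theory Defs
  imports "HOL-Analysis.Analysis"
begin

definition obeta_quadrant :: "real \<Rightarrow> real \<times> real \<Rightarrow> real \<Rightarrow> real \<Rightarrow> (real \<times> real) set" where
  "obeta_quadrant \<beta> a e1 e2 =
     {a + (s, 0) + (t * cos \<beta>, t * sin \<beta>) | s t. e1 * s > 0 \<and> e2 * t > 0}"

definition obeta_quadrants :: "real \<Rightarrow> (real \<times> real) set set" where
  "obeta_quadrants \<beta> =
     {obeta_quadrant \<beta> a e1 e2 | a e1 e2. e1 \<in> {1, -1} \<and> e2 \<in> {1, -1}}"

definition obeta_hull :: "real \<Rightarrow> (real \<times> real) set \<Rightarrow> (real \<times> real) set" where
  "obeta_hull \<beta> P = UNIV - \<Union>{Q \<in> obeta_quadrants \<beta>. Q \<inter> P = {}}"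

definition area :: "(real \<times> real) set \<Rightarrow> real" where
  "area S = measure lebesgue S"

end

theory Submission
  imports Defs
begin

definition tc :: "real \<Rightarrow> real \<times> real \<Rightarrow> real" where "tc \<beta> z = snd z / sin \<beta>"
definition sc :: "real \<Rightarrow> real \<times> real \<Rightarrow> real" where "sc \<beta> z = fst z - tc \<beta> z * cos \<beta>"
definition mk :: "real \<Rightarrow> real \<Rightarrow> real \<Rightarrow> real \<times> real" where
  "mk \<beta> s t = (s + t * cos \<beta>, t * sin \<beta>)"

lemma tc_mk[simp]: "sin \<beta> \<noteq> 0 \<Longrightarrow> tc \<beta> (mk \<beta> s t) = t"
  by (simp add: tc_def mk_def)
lemma sc_mk[simp]: "sin \<beta> \<noteq> 0 \<Longrightarrow> sc \<beta> (mk \<beta> s t) = s"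
  by (simp add: sc_def tc_def mk_def)

lemma fst_sc: "sin \<beta> \<noteq> 0 \<Longrightarrow> fst z = sc \<beta> z + tc \<beta> z * cos \<beta>"
  by (simp add: sc_def)
lemma snd_tc: "sin \<beta> \<noteq> 0 \<Longrightarrow> snd z = tc \<beta> z * sin \<beta>"
  by (simp add: tc_def)

lemma quad_iff:
  assumes "sin \<beta> \<noteq> 0"
  shows "z \<in> obeta_quadrant \<beta> a e1 e2 \<longleftrightarrow>
         e1 * (sc \<beta> z - sc \<beta> a) > 0 \<and> e2 * (tc \<beta> z - tc \<beta> a) > 0"
proof
  assume "z \<in> obeta_quadrant \<beta> a e1 e2"
  then obtain s t where z: "z = a + (s, 0) + (t * cos \<beta>, t * sin \<beta>)" and st: "e1 * s > 0" "e2 * t > 0"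
    unfolding obeta_quadrant_def by blast
  have "tc \<beta> z - tc \<beta> a = t" using assms unfolding z tc_def by (simp add: field_simps)
  moreover have "sc \<beta> z - sc \<beta> a = s" using assms unfolding z sc_def tc_def by (simp add: field_simps)
  ultimately show "e1 * (sc \<beta> z - sc \<beta> a) > 0 \<and> e2 * (tc \<beta> z - tc \<beta> a) > 0" using st by simp
next
  assume h: "e1 * (sc \<beta> z - sc \<beta> a) > 0 \<and> e2 * (tc \<beta> z - tc \<beta> a) > 0"
  have "z = a + (sc \<beta> z - sc \<beta> a, 0) + ((tc \<beta> z - tc \<beta> a) * cos \<beta>, (tc \<beta> z - tc \<beta> a) * sin \<beta>)"
    using assms by (simp add: prod_eq_iff sc_def tc_def field_simps)
  then show "z \<in> obeta_quadrant \<beta> a e1 e2" using h unfolding obeta_quadrant_def by blast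
qed

lemma quad_in: "e1 \<in> {1,-1} \<Longrightarrow> e2 \<in> {1,-1} \<Longrightarrow> obeta_quadrant \<beta> a e1 e2 \<in> obeta_quadrants \<beta>"
  unfolding obeta_quadrants_def by blast

lemma not_in_hull_slack:
  assumes s: "sin \<beta> \<noteq> 0" and e: "e1 \<in> {1,-1}" "e2 \<in> {1,-1}" and d: "d > 0"
    and np: "\<And>p. p \<in> P \<Longrightarrow> \<not> (e1 * (sc \<beta> p - sc \<beta> x) > - d \<and> e2 * (tc \<beta> p - tc \<beta> x) > - d)"
  shows "x \<notin> obeta_hull \<beta> P"
proof -
  define a where "a = mk \<beta> (sc \<beta> x - e1 * d) (tc \<beta> x - e2 * d)"
  have e1s: "e1 * e1 = 1" and e2s: "e2 * e2 = 1" using e by auto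
  have "x \<in> obeta_quadrant \<beta> a e1 e2"
    using s d e1s e2s by (simp add: quad_iff a_def algebra_simps)
  moreover have "obeta_quadrant \<beta> a e1 e2 \<inter> P = {}"
  proof (rule ccontr)
    assume "obeta_quadrant \<beta> a e1 e2 \<inter> P \<noteq> {}"
    then obtain p where p: "p \<in> P" "p \<in> obeta_quadrant \<beta> a e1 e2" by blast
    then have "e1 * (sc \<beta> p - sc \<beta> x) + d > 0" "e2 * (tc \<beta> p - tc \<beta> x) + d > 0"
      using s e1s e2s by (simp_all add: quad_iff a_def algebra_simps)
    then show False using np[OF p(1)] by linarith
  qed
  ultimately show ?thesis unfolding obeta_hull_def using quad_in[OF e] by blast
qed

lemma in_hull:
  assumes s: "sin \<beta> \<noteq> 0"
    and h: "\<And>e1 e2. e1 \<in> {1,-1} \<Longrightarrow> e2 \<in> {1,-1} \<Longrightarrow>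
              \<exists>p\<in>P. e1 * (sc \<beta> p - sc \<beta> x) > 0 \<and> e2 * (tc \<beta> p - tc \<beta> x) > 0"
  shows "x \<in> obeta_hull \<beta> P"
proof -
  have "x \<notin> Q" if Qq: "Q \<in> obeta_quadrants \<beta>" "Q \<inter> P = {}" for Q
  proof
    assume xQ: "x \<in> Q"
    obtain a e1 e2 where Q: "Q = obeta_quadrant \<beta> a e1 e2" and e: "e1 \<in> {1,-1}" "e2 \<in> {1,-1}"
      using Qq(1) unfolding obeta_quadrants_def by blast
    obtain p where p: "p \<in> P" "e1 * (sc \<beta> p - sc \<beta> x) > 0" "e2 * (tc \<beta> p - tc \<beta> x) > 0"
      using h[OF e] by blast
    have "e1 * (sc \<beta> x - sc \<beta> a) > 0" "e2 * (tc \<beta> x - tc \<beta> a) > 0"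
      using xQ unfolding Q quad_iff[OF s] by auto
    with p have "e1 * (sc \<beta> p - sc \<beta> a) > 0" "e2 * (tc \<beta> p - tc \<beta> a) > 0"
      by (simp_all add: algebra_simps)
    then have "p \<in> Q" unfolding Q quad_iff[OF s] by simp
    then show False using Qq(2) p(1) by blast
  qed
  then show ?thesis unfolding obeta_hull_def by blast
qed

lemma aux_prod0:
  fixes v c d :: real
  assumes "c \<le> 1" "c \<ge> 0" "v > - d" "d > 0"
  shows "v * c \<ge> - d"
proof (cases "v \<ge> 0")
  case True then have "v * c \<ge> 0" using assms(2) by simp
  then show ?thesis using assms(4) by linarith
next
  case False
  then have "v * c \<ge> v * 1" using assms(1) by (intro mult_left_mono_neg) auto
  then show ?thesis using assms by linarith
qed

lemma aux_prod:
  fixes v c e d :: real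
  assumes "\<bar>c\<bar> \<le> 1" "e \<in> {1,-1}" "e * c \<ge> 0" "e * v > - d" "d > 0"
  shows "v * c \<ge> - d"
proof -
  have "v * c = (e * v) * (e * c)" using assms(2) by auto
  moreover have "e * c \<le> 1" using assms(1,2) by auto
  moreover have "(e * v) * (e * c) \<ge> - d" by (rule aux_prod0) (use calculation(2) assms(3,4,5) in auto)
  ultimately show ?thesis by linarith
qed

lemma hull_bounded:
  assumes b: "0 < \<beta>" "\<beta> < pi" and R: "\<And>p. p \<in> P \<Longrightarrow> \<bar>fst p\<bar> \<le> R \<and> \<bar>snd p\<bar> \<le> R"
  shows "obeta_hull \<beta> P \<subseteq> cbox (-R,-R) (R,R)"
proof
  fix x assume x: "x \<in> obeta_hull \<beta> P"
  have sp: "sin \<beta> > 0" using b sin_gt_zero by blast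
  then have s: "sin \<beta> \<noteq> 0" by simp
  have c1: "\<bar>cos \<beta>\<bar> \<le> 1" by simp
  define e where "e = (if cos \<beta> \<ge> 0 then 1 else (-1::real))"
  have e: "e \<in> {1,-1}" "e * e = 1" "e * cos \<beta> \<ge> 0" unfolding e_def by auto
  have "fst x \<le> R"
  proof (rule ccontr)
    assume "\<not> fst x \<le> R"
    define d where "d = (fst x - R) / 4"
    have d: "d > 0" using \<open>\<not> fst x \<le> R\<close> by (simp add: d_def)
    have d4: "fst x - R = 4 * d" unfolding d_def by simp
    have "x \<notin> obeta_hull \<beta> P"
    proof (rule not_in_hull_slack[OF s _ e(1) d])
      fix p assume p: "p \<in> P"
      have fp: "fst p \<le> R" "fst p \<ge> -R" "snd p \<le> R" "snd p \<ge> -R" using R[OF p] by auto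
      show "\<not> (1 * (sc \<beta> p - sc \<beta> x) > - d \<and> e * (tc \<beta> p - tc \<beta> x) > - d)"
      proof
        assume h: "1 * (sc \<beta> p - sc \<beta> x) > - d \<and> e * (tc \<beta> p - tc \<beta> x) > - d"
        have "(tc \<beta> p - tc \<beta> x) * cos \<beta> \<ge> - d" by (rule aux_prod[OF c1 e(1) e(3)]) (use h d in auto)
        moreover have "fst p - fst x = (sc \<beta> p - sc \<beta> x) + (tc \<beta> p - tc \<beta> x) * cos \<beta>"
          using fst_sc[OF s, of p] fst_sc[OF s, of x] by (simp add: algebra_simps)
        moreover have "sc \<beta> p - sc \<beta> x > - d \<or> sc \<beta> x - sc \<beta> p > - d" using h by auto
        ultimately show False using fp d d4 h by auto
      qed
    qed simp
    with x show False by blast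
  qed
  moreover have "fst x \<ge> - R"
  proof (rule ccontr)
    assume "\<not> fst x \<ge> - R"
    define d where "d = (- R - fst x) / 4"
    have d: "d > 0" using \<open>\<not> fst x \<ge> - R\<close> by (simp add: d_def)
    have d4: "- R - fst x = 4 * d" unfolding d_def by simp
    have e': "- e \<in> {1,-1}" "(-e) * (-e) = 1" "(-e) * (- cos \<beta>) \<ge> 0" using e by auto
    have c1': "\<bar>- cos \<beta>\<bar> \<le> 1" by simp
    have "x \<notin> obeta_hull \<beta> P"
    proof (rule not_in_hull_slack[OF s _ e'(1) d])
      fix p assume p: "p \<in> P"
      have fp: "fst p \<le> R" "fst p \<ge> -R" "snd p \<le> R" "snd p \<ge> -R" using R[OF p] by auto
      show "\<not> ((-1) * (sc \<beta> p - sc \<beta> x) > - d \<and> (-e) * (tc \<beta> p - tc \<beta> x) > - d)"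
      proof
        assume h: "(-1) * (sc \<beta> p - sc \<beta> x) > - d \<and> (-e) * (tc \<beta> p - tc \<beta> x) > - d"
        have "(tc \<beta> p - tc \<beta> x) * (- cos \<beta>) \<ge> - d" by (rule aux_prod[OF c1' e'(1) e'(3)]) (use h d in auto)
        moreover have "fst p - fst x = (sc \<beta> p - sc \<beta> x) + (tc \<beta> p - tc \<beta> x) * cos \<beta>"
          using fst_sc[OF s, of p] fst_sc[OF s, of x] by (simp add: algebra_simps)
        moreover have "sc \<beta> p - sc \<beta> x > - d \<or> sc \<beta> x - sc \<beta> p > - d" using h by auto
        ultimately show False using fp d d4 h by auto
      qed
    qed simp
    with x show False by blast
  qed
  moreover have "snd x \<le> R"
  proof (rule ccontr)
    assume "\<not> snd x \<le> R"
    define d where "d = (snd x - R) / (2 * sin \<beta>)"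
    have d: "d > 0" using \<open>\<not> snd x \<le> R\<close> sp by (simp add: d_def)
    have "x \<notin> obeta_hull \<beta> P"
    proof (rule not_in_hull_slack[OF s _ _ d])
      fix p assume p: "p \<in> P"
      have fp: "fst p \<le> R" "fst p \<ge> -R" "snd p \<le> R" "snd p \<ge> -R" using R[OF p] by auto
      show "\<not> (1 * (sc \<beta> p - sc \<beta> x) > - d \<and> 1 * (tc \<beta> p - tc \<beta> x) > - d)"
      proof
        assume h: "1 * (sc \<beta> p - sc \<beta> x) > - d \<and> 1 * (tc \<beta> p - tc \<beta> x) > - d"
        have "(tc \<beta> p - tc \<beta> x) * sin \<beta> > - d * sin \<beta>" using h sp by (intro mult_strict_right_mono) auto
        moreover have "snd p - snd x = (tc \<beta> p - tc \<beta> x) * sin \<beta>"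
          using snd_tc[OF s, of p] snd_tc[OF s, of x] by (simp add: algebra_simps)
        moreover have "2 * (d * sin \<beta>) = snd x - R" using sp by (simp add: d_def)
        ultimately show False using fp \<open>\<not> snd x \<le> R\<close> by linarith
      qed
    qed simp_all
    with x show False by blast
  qed
  moreover have "snd x \<ge> - R"
  proof (rule ccontr)
    assume "\<not> snd x \<ge> - R"
    define d where "d = (- R - snd x) / (2 * sin \<beta>)"
    have d: "d > 0" using \<open>\<not> snd x \<ge> - R\<close> sp by (simp add: d_def)
    have "x \<notin> obeta_hull \<beta> P"
    proof (rule not_in_hull_slack[OF s _ _ d])
      fix p assume p: "p \<in> P"
      have fp: "fst p \<le> R" "fst p \<ge> -R" "snd p \<le> R" "snd p \<ge> -R" using R[OF p] by auto
      show "\<not> (1 * (sc \<beta> p - sc \<beta> x) > - d \<and> (-1) * (tc \<beta> p - tc \<beta> x) > - d)"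
      proof
        assume h: "1 * (sc \<beta> p - sc \<beta> x) > - d \<and> (-1) * (tc \<beta> p - tc \<beta> x) > - d"
        have "(tc \<beta> x - tc \<beta> p) * sin \<beta> > - d * sin \<beta>" using h sp by (intro mult_strict_right_mono) auto
        moreover have "snd p - snd x = (tc \<beta> p - tc \<beta> x) * sin \<beta>"
          using snd_tc[OF s, of p] snd_tc[OF s, of x] by (simp add: algebra_simps)
        moreover have "2 * (d * sin \<beta>) = - R - snd x" using sp by (simp add: d_def)
        ultimately show False using fp \<open>\<not> snd x \<ge> - R\<close> by (simp add: algebra_simps)
      qed
    qed simp_all
    with x show False by blast
  qed
  ultimately show "x \<in> cbox (-R,-R) (R,R)" by (cases x) (simp add: cbox_Pair_iff)
qed

lemma open_quad:
  assumes s: "sin \<beta> \<noteq> 0"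
  shows "open (obeta_quadrant \<beta> a e1 e2)"
proof -
  have eq: "obeta_quadrant \<beta> a e1 e2 =
      {z. 0 < e1 * (sc \<beta> z - sc \<beta> a)} \<inter>
      {z. 0 < e2 * (tc \<beta> z - tc \<beta> a)}"
    unfolding set_eq_iff quad_iff[OF s] by simp
  show ?thesis unfolding eq sc_def[of _ z for z] tc_def[of _ z for z]
    by (intro open_Int open_Collect_less continuous_intros) (auto simp: s)
qed

lemma closed_hull: "sin \<beta> \<noteq> 0 \<Longrightarrow> closed (obeta_hull \<beta> P)"
  unfolding obeta_hull_def
  by (intro closed_Diff closed_UNIV open_Union) (auto simp: obeta_quadrants_def open_quad)

lemma hull_lmeasurable:
  assumes b: "0 < \<beta>" "\<beta> < pi" and R: "\<And>p. p \<in> P \<Longrightarrow> \<bar>fst p\<bar> \<le> R \<and> \<bar>snd p\<bar> \<le> R"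
  shows "obeta_hull \<beta> P \<in> lmeasurable"
proof -
  have "sin \<beta> > 0" using b sin_gt_zero by blast
  then have "closed (obeta_hull \<beta> P)" by (intro closed_hull) simp
  moreover have "bounded (obeta_hull \<beta> P)"
    by (meson hull_bounded[OF b R] bounded_cbox bounded_subset)
  ultimately show ?thesis by (intro lmeasurable_compact) (simp add: compact_eq_bounded_closed)
qed

lemma shift_off_axis:
  assumes s: "sin \<beta> \<noteq> 0" and fin: "finite P" and e: "e1 \<in> {1,-1}" "e2 \<in> {1,-1}"
    and off: "\<And>p. p \<in> P \<Longrightarrow> sc \<beta> p \<noteq> sc \<beta> x \<and> tc \<beta> p \<noteq> tc \<beta> x"
    and np: "\<And>p. p \<in> P \<Longrightarrow> \<not> (e1 * (sc \<beta> p - sc \<beta> x) > 0 \<and> e2 * (tc \<beta> p - tc \<beta> x) > 0)"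
  shows "x \<notin> obeta_hull \<beta> P"
proof -
  define D where "D = insert 1 ((\<lambda>p. \<bar>sc \<beta> p - sc \<beta> x\<bar>) ` P \<union> (\<lambda>p. \<bar>tc \<beta> p - tc \<beta> x\<bar>) ` P)"
  define d where "d = Min D"
  have finD: "finite D" using fin by (simp add: D_def)
  have "d > 0" unfolding d_def using finD off by (auto simp: D_def Min_gr_iff)
  moreover have dle: "d \<le> \<bar>sc \<beta> p - sc \<beta> x\<bar>" "d \<le> \<bar>tc \<beta> p - tc \<beta> x\<bar>" if "p \<in> P" for p
    unfolding d_def using finD that by (auto simp: D_def intro!: Min_le)
  have key: "e * v > 0" if "e \<in> {1,-1}" "e * v > - d" "d \<le> \<bar>v\<bar>" for e v :: real
    using that by (auto simp: abs_if split: if_splits)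
  show ?thesis
  proof (rule not_in_hull_slack[OF s e \<open>d > 0\<close>])
    fix p assume p: "p \<in> P"
    show "\<not> (e1 * (sc \<beta> p - sc \<beta> x) > - d \<and> e2 * (tc \<beta> p - tc \<beta> x) > - d)"
      using key[OF e(1)] key[OF e(2)] dle[OF p] np[OF p] by blast
  qed
qed

lemma comb:
  fixes x y sa sb su ta tu tv :: real
  assumes "\<And>e1 e2. e1 \<in> {1,-1} \<Longrightarrow> e2 \<in> {1,-1} \<Longrightarrow>
     (e1*(sa-x)>0 \<and> e2*(ta-y)>0) \<or> (e1*(sb-x)>0 \<and> e2*(ta-y)>0) \<or>
     (e1*(su-x)>0 \<and> e2*(tu-y)>0) \<or> (e1*(su-x)>0 \<and> e2*(tv-y)>0)"
  shows False
proof -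
  have 1: "(sa-x>0 \<and> ta-y>0) \<or> (sb-x>0 \<and> ta-y>0) \<or> (su-x>0 \<and> tu-y>0) \<or> (su-x>0 \<and> tv-y>0)"
    using assms[of 1 1] by simp
  have 2: "(sa-x<0 \<and> ta-y>0) \<or> (sb-x<0 \<and> ta-y>0) \<or> (su-x<0 \<and> tu-y>0) \<or> (su-x<0 \<and> tv-y>0)"
    using assms[of "-1" 1] by simp
  have 3: "(sa-x>0 \<and> ta-y<0) \<or> (sb-x>0 \<and> ta-y<0) \<or> (su-x>0 \<and> tu-y<0) \<or> (su-x>0 \<and> tv-y<0)"
    using assms[of 1 "-1"] by simp
  have 4: "(sa-x<0 \<and> ta-y<0) \<or> (sb-x<0 \<and> ta-y<0) \<or> (su-x<0 \<and> tu-y<0) \<or> (su-x<0 \<and> tv-y<0)"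
    using assms[of "-1" "-1"] by simp
  show False
  proof (cases "ta - y > 0")
    case True
    have "su - x > 0" using 3 True by auto
    moreover have "su - x < 0" using 4 True by auto
    ultimately show False by simp
  next
    case False
    have "su - x > 0" using 1 False by auto
    moreover have "su - x < 0" using 2 False by auto
    ultimately show False by simp
  qed
qed

lemma negl_sc: "sin \<beta> \<noteq> 0 \<Longrightarrow> negligible {z. sc \<beta> z = c}"
proof -
  assume s: "sin \<beta> \<noteq> 0"
  have "{z. sc \<beta> z = c} = {z. (1::real, - cos \<beta> / sin \<beta>) \<bullet> z = c}"
    by (auto simp: sc_def tc_def inner_prod_def)
  then show ?thesis using negligible_hyperplane[of "(1::real, - cos \<beta> / sin \<beta>)" c] by (simp add: zero_prod_def)
qed

lemma negl_tc: "sin \<beta> \<noteq> 0 \<Longrightarrow> negligible {z. tc \<beta> z = c}"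
proof -
  assume s: "sin \<beta> \<noteq> 0"
  have "{z. tc \<beta> z = c} = {z. (0::real, 1 / sin \<beta>) \<bullet> z = c}"
    by (auto simp: tc_def inner_prod_def)
  then show ?thesis using s negligible_hyperplane[of "(0::real, 1 / sin \<beta>)" c] by (simp add: zero_prod_def)
qed

lemma tc_sign:
  assumes "sin \<beta> > 0"
  shows "e * (tc \<beta> p - tc \<beta> x) > 0 \<longleftrightarrow> e * (snd p - snd x) > 0"
proof -
  have "e * (tc \<beta> p - tc \<beta> x) = e * (snd p - snd x) / sin \<beta>"
    using assms by (simp add: tc_def field_simps)
  then show ?thesis using assms by (simp add: zero_less_divide_iff)
qed

lemma in_hull4:
  assumes s: "sin \<beta> \<noteq> 0"
    and "\<exists>p\<in>P. sc \<beta> p - sc \<beta> x > 0 \<and> tc \<beta> p - tc \<beta> x > 0"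
    and "\<exists>p\<in>P. sc \<beta> p - sc \<beta> x < 0 \<and> tc \<beta> p - tc \<beta> x > 0"
    and "\<exists>p\<in>P. sc \<beta> p - sc \<beta> x > 0 \<and> tc \<beta> p - tc \<beta> x < 0"
    and "\<exists>p\<in>P. sc \<beta> p - sc \<beta> x < 0 \<and> tc \<beta> p - tc \<beta> x < 0"
  shows "x \<in> obeta_hull \<beta> P"
proof (rule in_hull[OF s])
  fix e1 e2 :: real assume "e1 \<in> {1,-1}" "e2 \<in> {1,-1}"
  then show "\<exists>p\<in>P. e1 * (sc \<beta> p - sc \<beta> x) > 0 \<and> e2 * (tc \<beta> p - tc \<beta> x) > 0"
    using assms(2-5) by auto
qed

lemma final:
  assumes fin: "finite P" and b0: "0 < \<beta>0" "\<beta>0 < pi" and b1: "0 < \<beta>1" "\<beta>1 < pi"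
    and R: "\<And>p. p \<in> P \<Longrightarrow> \<bar>fst p\<bar> \<le> R \<and> \<bar>snd p\<bar> \<le> R"
    and z: "area (obeta_hull \<beta>0 P) = 0"
    and box: "cbox a b \<subseteq> obeta_hull \<beta>1 P" and pos: "measure lebesgue (cbox a b) > 0"
  shows "(SUP \<beta>\<in>{0<..<pi}. area (obeta_hull \<beta> P)) \<noteq> area (obeta_hull \<beta>0 P)"
proof -
  have le: "area (obeta_hull \<beta> P) \<le> measure lebesgue (cbox (-R,-R) (R,R))"
    if "\<beta> \<in> {0<..<pi}" for \<beta>
  proof -
    have "0 < \<beta>" "\<beta> < pi" using that by auto
    from hull_bounded[OF this R] hull_lmeasurable[OF this R] show ?thesis
      unfolding area_def by (intro measure_mono_fmeasurable) (auto dest: fmeasurableD)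
  qed
  have bdd: "bdd_above ((\<lambda>\<beta>. area (obeta_hull \<beta> P)) ` {0<..<pi})"
    using le by (intro bdd_aboveI2) auto
  have "measure lebesgue (cbox a b) \<le> area (obeta_hull \<beta>1 P)"
    unfolding area_def using box hull_lmeasurable[OF b1 R]
    by (intro measure_mono_fmeasurable) auto
  also have "\<dots> \<le> (SUP \<beta>\<in>{0<..<pi}. area (obeta_hull \<beta> P))"
    using b1 bdd by (intro cSUP_upper) auto
  finally show ?thesis using pos z by simp
qed

lemma zero_area:
  assumes b0: "0 < \<beta>0" "\<beta>0 < pi"
  defines "P \<equiv> {(1::real, 3/2::real), (-1, 3/2), (cos \<beta>0, sin \<beta>0), (- cos \<beta>0, - sin \<beta>0)}"
  shows "area (obeta_hull \<beta>0 P) = 0"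
proof -
  have sp: "sin \<beta>0 > 0" using b0 sin_gt_zero by blast
  then have s: "sin \<beta>0 \<noteq> 0" by simp
  define A where "A = (1::real, 3/2::real)"
  define B where "B = (-1::real, 3/2::real)"
  define u where "u = (cos \<beta>0, sin \<beta>0)"
  define v where "v = (- cos \<beta>0, - sin \<beta>0)"
  have P: "P = {A, B, u, v}" unfolding P_def A_def B_def u_def v_def by simp
  have tAB: "tc \<beta>0 B = tc \<beta>0 A" by (simp add: A_def B_def tc_def)
  have suv: "sc \<beta>0 v = sc \<beta>0 u" using s by (simp add: u_def v_def sc_def tc_def)
  define N where "N = (\<Union>p\<in>P. {z. sc \<beta>0 z = sc \<beta>0 p} \<union> {z. tc \<beta>0 z = tc \<beta>0 p})"
  have sub: "obeta_hull \<beta>0 P \<subseteq> N"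
  proof
    fix x assume x: "x \<in> obeta_hull \<beta>0 P"
    show "x \<in> N"
    proof (rule ccontr)
      assume "x \<notin> N"
      then have off: "\<And>p. p \<in> P \<Longrightarrow> sc \<beta>0 p \<noteq> sc \<beta>0 x \<and> tc \<beta>0 p \<noteq> tc \<beta>0 x"
        unfolding N_def by auto
      have "\<exists>e1\<in>{1,-1}. \<exists>e2\<in>{1,-1}. \<forall>p\<in>P. \<not> (e1 * (sc \<beta>0 p - sc \<beta>0 x) > 0 \<and> e2 * (tc \<beta>0 p - tc \<beta>0 x) > 0)"
      proof (rule ccontr)
        assume "\<not> ?thesis"
        then have h: "\<And>e1 e2. e1 \<in> {1,-1} \<Longrightarrow> e2 \<in> {1,-1} \<Longrightarrow>
            \<exists>p\<in>P. e1 * (sc \<beta>0 p - sc \<beta>0 x) > 0 \<and> e2 * (tc \<beta>0 p - tc \<beta>0 x) > 0" by blast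
        show False
        proof (rule comb[of "sc \<beta>0 A" "sc \<beta>0 x" "tc \<beta>0 A" "tc \<beta>0 x" "sc \<beta>0 B" "sc \<beta>0 u" "tc \<beta>0 u" "tc \<beta>0 v"])
          fix e1 e2 :: real assume e: "e1 \<in> {1,-1}" "e2 \<in> {1,-1}"
          from h[OF e] show "(e1*(sc \<beta>0 A - sc \<beta>0 x)>0 \<and> e2*(tc \<beta>0 A - tc \<beta>0 x)>0) \<or>
            (e1*(sc \<beta>0 B - sc \<beta>0 x)>0 \<and> e2*(tc \<beta>0 A - tc \<beta>0 x)>0) \<or>
            (e1*(sc \<beta>0 u - sc \<beta>0 x)>0 \<and> e2*(tc \<beta>0 u - tc \<beta>0 x)>0) \<or>
            (e1*(sc \<beta>0 u - sc \<beta>0 x)>0 \<and> e2*(tc \<beta>0 v - tc \<beta>0 x)>0)"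
            unfolding P using tAB suv by auto
        qed
      qed
      then obtain e1 e2 where e: "e1 \<in> {1,-1}" "e2 \<in> {1,-1}"
        and np: "\<And>p. p \<in> P \<Longrightarrow> \<not> (e1 * (sc \<beta>0 p - sc \<beta>0 x) > 0 \<and> e2 * (tc \<beta>0 p - tc \<beta>0 x) > 0)"
        by blast
      have "x \<notin> obeta_hull \<beta>0 P"
        by (rule shift_off_axis[OF s _ e off np]) (simp_all add: P)
      with x show False by blast
    qed
  qed
  have "negligible N" unfolding N_def
    by (intro negligible_Union) (auto simp: P negl_sc[OF s] negl_tc[OF s])
  then have "negligible (obeta_hull \<beta>0 P)" using sub negligible_subset by blast
  then show ?thesis unfolding area_def by (rule negligible_imp_measure0)
qed

theorem lemma4:
  fixes \<beta>\<^sub>0 :: real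
  assumes "0 < \<beta>\<^sub>0" and "\<beta>\<^sub>0 < pi"
  shows "\<exists>P :: (real \<times> real) set. finite P \<and>
           (SUP \<beta>\<in>{0<..<pi}. area (obeta_hull \<beta> P)) \<noteq> area (obeta_hull \<beta>\<^sub>0 P)"
proof -
  define P where "P = {(1::real, 3/2::real), (-1, 3/2), (cos \<beta>\<^sub>0, sin \<beta>\<^sub>0), (- cos \<beta>\<^sub>0, - sin \<beta>\<^sub>0)}"
  have sp: "sin \<beta>\<^sub>0 > 0" using assms sin_gt_zero by blast
  have fin: "finite P" by (simp add: P_def)
  have R: "\<bar>fst p\<bar> \<le> 2 \<and> \<bar>snd p\<bar> \<le> 2" if "p \<in> P" for p
  proof -
    have "\<bar>cos \<beta>\<^sub>0\<bar> \<le> 2" "\<bar>sin \<beta>\<^sub>0\<bar> \<le> 2"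
      using abs_cos_le_one[of "\<beta>\<^sub>0"] abs_sin_le_one[of "\<beta>\<^sub>0"] by linarith+
    then show ?thesis using that by (auto simp: P_def)
  qed
  have z: "area (obeta_hull \<beta>\<^sub>0 P) = 0" unfolding P_def by (rule zero_area[OF assms])
  show ?thesis
  proof (cases "cos \<beta>\<^sub>0 = 0")
    case False
    define m where "m = \<bar>cos \<beta>\<^sub>0\<bar>"
    have m: "m > 0" "m \<le> 1" using False by (auto simp: m_def)
    have s1: "sin (pi/2) \<noteq> 0" by simp
    have scp: "sc (pi/2) z = fst z" for z by (simp add: sc_def)
    have tcp: "tc (pi/2) z = snd z" for z by (simp add: tc_def)
    have sle: "sin \<beta>\<^sub>0 \<le> 1" by simp
    have box: "cbox (-m/2, 5/4::real) (m/2, 11/8) \<subseteq> obeta_hull (pi/2) P"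
    proof
      fix x assume "x \<in> cbox (-m/2, 5/4::real) (m/2, 11/8)"
      then have x: "-m/2 \<le> fst x" "fst x \<le> m/2" "5/4 \<le> snd x" "snd x \<le> 11/8"
        by (cases x; simp add: cbox_Pair_iff)+
      have sx: "sin \<beta>\<^sub>0 < snd x" "- sin \<beta>\<^sub>0 < snd x" using sin_le_one[of "\<beta>\<^sub>0"] x(3) sp by linarith+
      have fu: "\<exists>p\<in>P. fst p - fst x > 0 \<and> snd p - snd x < 0"
      proof (cases "cos \<beta>\<^sub>0 > 0")
        case True
        then show ?thesis using x sx m m_def
          by (intro bexI[of _ "(cos \<beta>\<^sub>0, sin \<beta>\<^sub>0)"]) (auto simp: P_def)
      next
        case False
        then show ?thesis using x sx m m_def sp
          by (intro bexI[of _ "(- cos \<beta>\<^sub>0, - sin \<beta>\<^sub>0)"]) (auto simp: P_def)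
      qed
      have fv: "\<exists>p\<in>P. fst p - fst x < 0 \<and> snd p - snd x < 0"
      proof (cases "cos \<beta>\<^sub>0 > 0")
        case True
        then show ?thesis using x sx m m_def sp
          by (intro bexI[of _ "(- cos \<beta>\<^sub>0, - sin \<beta>\<^sub>0)"]) (auto simp: P_def)
      next
        case False
        then show ?thesis using x sx m m_def
          by (intro bexI[of _ "(cos \<beta>\<^sub>0, sin \<beta>\<^sub>0)"]) (auto simp: P_def)
      qed
      show "x \<in> obeta_hull (pi/2) P"
      proof (rule in_hull4[OF s1], unfold scp tcp)
        show "\<exists>p\<in>P. 0 < fst p - fst x \<and> 0 < snd p - snd x"
          using x m by (intro bexI[of _ "(1, 3/2)"]) (auto simp: P_def)
        show "\<exists>p\<in>P. fst p - fst x < 0 \<and> 0 < snd p - snd x"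
          using x m by (intro bexI[of _ "(-1, 3/2)"]) (auto simp: P_def)
      qed (use fu fv in auto)
    qed
    have pos: "measure lebesgue (cbox (-m/2::real, 5/4::real) (m/2, 11/8)) > 0"
      using m by (simp add: content_cbox_cases Basis_prod_def prod.union_disjoint)
    have "(SUP \<beta>\<in>{0<..<pi}. area (obeta_hull \<beta> P)) \<noteq> area (obeta_hull \<beta>\<^sub>0 P)"
      by (rule final[OF fin assms _ _ R z box pos]) simp_all
    with fin show ?thesis by blast
  next
    case True
    have "sin \<beta>\<^sub>0 ^ 2 = 1" using sin_cos_squared_add[of \<beta>\<^sub>0] True by simp
    then have s0: "sin \<beta>\<^sub>0 = 1" using sp by (simp add: power2_eq_1_iff)
    have P': "P = {(1::real, 3/2::real), (-1, 3/2), (0, 1), (0, -1)}"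
      unfolding P_def using True s0 by simp
    have s4: "sin (pi/4) > 0" by (simp add: sin_45)
    have scp: "sc (pi/4) z = fst z - snd z" for z by (simp add: sc_def tc_def sin_45 cos_45)
    have box: "cbox (3/10, 11/10::real) (4/10, 12/10) \<subseteq> obeta_hull (pi/4) P"
    proof
      fix x assume "x \<in> cbox (3/10::real, 11/10::real) (4/10, 12/10)"
      then have x: "3/10 \<le> fst x" "fst x \<le> 4/10" "11/10 \<le> snd x" "snd x \<le> 12/10"
        by (cases x; simp add: cbox_Pair_iff)+
      have tp: "tc (pi/4) p - tc (pi/4) x > 0 \<longleftrightarrow> snd p - snd x > 0" for p
        using tc_sign[OF s4, of 1 p x] by simp
      have tn: "tc (pi/4) p - tc (pi/4) x < 0 \<longleftrightarrow> snd p - snd x < 0" for p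
        using tc_sign[OF s4, of "-1" p x] by simp
      show "x \<in> obeta_hull (pi/4) P"
      proof (rule in_hull4, unfold scp tp tn)
        show "sin (pi/4) \<noteq> 0" using s4 by simp
        show "\<exists>p\<in>P. 0 < fst p - snd p - (fst x - snd x) \<and> 0 < snd p - snd x"
          using x by (intro bexI[of _ "(1, 3/2)"]) (auto simp: P')
        show "\<exists>p\<in>P. fst p - snd p - (fst x - snd x) < 0 \<and> 0 < snd p - snd x"
          using x by (intro bexI[of _ "(-1, 3/2)"]) (auto simp: P')
        show "\<exists>p\<in>P. 0 < fst p - snd p - (fst x - snd x) \<and> snd p - snd x < 0"
          using x by (intro bexI[of _ "(0, -1)"]) (auto simp: P')
        show "\<exists>p\<in>P. fst p - snd p - (fst x - snd x) < 0 \<and> snd p - snd x < 0"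
          using x by (intro bexI[of _ "(0, 1)"]) (auto simp: P')
      qed
    qed
    have pos: "measure lebesgue (cbox (3/10::real, 11/10::real) (4/10, 12/10)) > 0"
      by (simp add: content_cbox_cases Basis_prod_def prod.union_disjoint)
    have "(SUP \<beta>\<in>{0<..<pi}. area (obeta_hull \<beta> P)) \<noteq> area (obeta_hull \<beta>\<^sub>0 P)"
      by (rule final[OF fin assms _ _ R z box pos]) simp_all
    with fin show ?thesis by blast
  qed
qed

end
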